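(* Let $d\ge1$, $\epsilon>0$, $\theta>0$ with $\theta\epsilon^2\ge c_0>0$, and $x\in\mathbb R^d$. Let $(\Pi(s))_{s\ge0}$ be a rate one Poisson process and $T(t)=\Pi(\theta t)/\theta$. Then for all $t\ge0$ and $y\in\mathbb R^d$, $\psi^{\epsilon,x}_t(y)=\mathbb E[p_{\epsilon^2+T(t)}(x,y)]$, and there is a constant $C$, independent of $\epsilon$ and $t$ (depending only on $d$ and $c_0$), such that $\|\psi^{\epsilon,x}_t\|_\infty\le\frac{C}{(\epsilon^2+t)^{d/2}}$.
   Context: $p_t(x,y)=(2\pi t)^{-d/2}\exp(-\|x-y\|^2/(2t))$ is the heat kernel. $q_\theta(x,dy)$ is the Gaussian distribution with mean $x$ and covariance $\theta^{-1}I$, and $\mathcal L^\theta f(x)=\theta\int(f(y)-f(x))q_\theta(x,dy)$ (the generator of a random walk jumping at rate $\theta$ with centered Gaussian jumps of covariance $\theta^{-1}I$). $\psi^{\epsilon,x}_t$ is the solution of $\partial_t\psi=\mathcal L^\theta\psi$ with $\psi_0(y)=p_{\epsilon^2}(x,y)$. *)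

theory Defs
  imports "HOL-Analysis.Analysis" "HOL-Probability.Probability"
begin

definition heat_kernel :: "real \<Rightarrow> real^'n \<Rightarrow> real^'n \<Rightarrow> real" where
  "heat_kernel t x y =
     (2 * pi * t) powr (- real CARD('n) / 2) * exp (- (norm (x - y) ^ 2) / (2 * t))"

text \<open>Generator L^theta f(x) = theta * int (f y - f x) q_theta(x,dy), where q_theta(x,.) is
  the Gaussian with mean x and covariance theta^{-1} I, i.e. with Lebesgue density
  p_{1/theta}(x,.).\<close>
definition gen_L :: "real \<Rightarrow> (real^'n \<Rightarrow> real) \<Rightarrow> real^'n \<Rightarrow> real" where
  "gen_L \<theta> f x = \<theta> * (\<integral>y. (f y - f x) * heat_kernel (1 / \<theta>) x y \<partial>lborel)"

text \<open>psi solves d/dt psi = L^theta psi on [0,oo) with psi_0 = f0, in the class of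
  functions that are Borel measurable and bounded in space, locally uniformly in time
  (the natural Banach-space (L^infty / C_b) sense; L^theta is a bounded operator there).\<close>
definition solves_generator_eq ::
    "real \<Rightarrow> (real^'n \<Rightarrow> real) \<Rightarrow> (real \<Rightarrow> real^'n \<Rightarrow> real) \<Rightarrow> bool" where
  "solves_generator_eq \<theta> f0 \<psi> \<longleftrightarrow>
     \<psi> 0 = f0 \<and>
     (\<forall>t\<ge>0. \<psi> t \<in> borel_measurable lborel) \<and>
     (\<forall>T\<ge>0. \<exists>B. \<forall>t\<in>{0..T}. \<forall>y. \<bar>\<psi> t y\<bar> \<le> B) \<and>
     (\<forall>t\<ge>0. \<forall>y. ((\<lambda>s. \<psi> s y) has_real_derivative gen_L \<theta> (\<psi> t) y) (at t within {0..}))"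

definition rate_one_poisson_process :: "'a measure \<Rightarrow> (real \<Rightarrow> 'a \<Rightarrow> nat) \<Rightarrow> bool" where
  "rate_one_poisson_process M N \<longleftrightarrow>
     prob_space M \<and>
     (\<forall>s\<ge>0. N s \<in> measurable M (count_space UNIV)) \<and>
     (\<forall>\<omega>\<in>space M. N 0 \<omega> = 0) \<and>
     (\<forall>\<omega>\<in>space M. \<forall>s t. 0 \<le> s \<longrightarrow> s \<le> t \<longrightarrow> N s \<omega> \<le> N t \<omega>) \<and>
     (\<forall>s t. 0 \<le> s \<longrightarrow> s < t \<longrightarrow>
        distr M (count_space UNIV) (\<lambda>\<omega>. N t \<omega> - N s \<omega>) = measure_pmf (poisson_pmf (t - s))) \<and>
     (\<forall>ts :: nat \<Rightarrow> real. \<forall>n. 0 \<le> ts 0 \<longrightarrow> (\<forall>i. ts i \<le> ts (Suc i)) \<longrightarrow>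
        prob_space.indep_vars M (\<lambda>_. count_space UNIV)
          (\<lambda>i \<omega>. N (ts (Suc i)) \<omega> - N (ts i) \<omega>) {..<n})"

end

theory Submission
  imports Defs
begin


lemma norm_sq_basis: "(norm (z::real^'n))^2 = (\<Sum>b\<in>Basis. (z \<bullet> b)^2)"
  unfolding power2_norm_eq_inner by (subst euclidean_inner) (simp add: power2_eq_square)

lemma heat_kernel_prod:
  fixes x z :: "real^'n"
  assumes s: "s > 0"
  shows "heat_kernel s x z = (\<Prod>b\<in>Basis. normal_density (x \<bullet> b) (sqrt s) (z \<bullet> b))"
proof -
  have "(\<Prod>b\<in>Basis. normal_density (x \<bullet> b) (sqrt s) (z \<bullet> b))
     = (\<Prod>b\<in>(Basis::(real^'n) set). 1 / sqrt (2 * pi * s) * exp (- (((x - z) \<bullet> b)^2) / (2 * s)))"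
    using s by (intro prod.cong refl) (simp add: normal_density_def inner_diff_left power2_commute)
  also have "\<dots> = (1 / sqrt (2 * pi * s))^CARD('n) * exp (\<Sum>b\<in>(Basis::(real^'n) set). - (((x - z) \<bullet> b)^2) / (2 * s))"
    by (simp only: prod.distrib prod_constant exp_sum finite_Basis) simp
  also have "(\<Sum>b\<in>(Basis::(real^'n) set). - (((x - z) \<bullet> b)^2) / (2 * s)) = - ((norm (x - z))^2) / (2 * s)"
    by (simp add: norm_sq_basis[of "x - z"] sum_divide_distrib sum_negf)
  also have "(1 / sqrt (2 * pi * s))^CARD('n) = (2 * pi * s) powr (- real CARD('n) / 2)"
  proof -
    have "(1 / sqrt (2 * pi * s)) = (2 * pi * s) powr (- 1 / 2)"
      using s by (simp add: powr_minus_divide powr_half_sqrt[symmetric] powr_minus)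
    then show ?thesis using s by (simp add: powr_realpow[symmetric] powr_powr)
  qed
  finally show ?thesis unfolding heat_kernel_def by simp
qed



lemma normal_prod_identity:
  fixes s r :: real assumes s: "s > 0" and r: "r > 0"
  shows "normal_density a (sqrt s) w * normal_density c (sqrt r) w =
    normal_density a (sqrt (s + r)) c * normal_density ((r * a + s * c) / (s + r)) (sqrt (s * r / (s + r))) w"
proof -
  have sq: "sqrt (2 * pi * s) * sqrt (2 * pi * r) = sqrt (2 * pi * (s + r)) * sqrt (2 * pi * (s * r / (s + r)))"
    using s r by (simp add: real_sqrt_mult[symmetric] field_simps)
  have ex: "- ((w - a)^2) / (2 * s) + - ((w - c)^2) / (2 * r) =
     - ((c - a)^2) / (2 * (s + r)) + - ((w - (r * a + s * c) / (s + r))^2) / (2 * (s * r / (s + r)))"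
  proof -
    have poly: "r * (s + r) * (w - a)^2 + s * (s + r) * (w - c)^2 = s * r * (c - a)^2 + ((s + r) * w - (r * a + s * c))^2"
      by (simp add: power2_eq_square algebra_simps)
    have e1: "(w - (r * a + s * c) / (s + r)) = ((s + r) * w - (r * a + s * c)) / (s + r)"
      using s r by (simp add: field_simps)
    have "- ((w - a)^2) / (2 * s) + - ((w - c)^2) / (2 * r) = - (r * (s + r) * (w - a)^2 + s * (s + r) * (w - c)^2) / (2 * s * r * (s + r))"
      using s r by (simp add: divide_simps) (simp add: algebra_simps)
    also have "\<dots> = - (s * r * (c - a)^2 + ((s + r) * w - (r * a + s * c))^2) / (2 * s * r * (s + r))"
      by (simp only: poly)
    also have "\<dots> = - ((c - a)^2) / (2 * (s + r)) + - ((w - (r * a + s * c) / (s + r))^2) / (2 * (s * r / (s + r)))"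
      unfolding e1 using s r apply (simp add: divide_simps power2_eq_square) by algebra
    finally show ?thesis .
  qed
  have "normal_density a (sqrt s) w * normal_density c (sqrt r) w =
     1 / (sqrt (2 * pi * s) * sqrt (2 * pi * r)) * exp (- ((w - a)^2) / (2 * s) + - ((w - c)^2) / (2 * r))"
    using s r by (simp add: normal_density_def exp_add[symmetric])
  also have "\<dots> = 1 / (sqrt (2 * pi * (s + r)) * sqrt (2 * pi * (s * r / (s + r)))) *
      exp (- ((c - a)^2) / (2 * (s + r)) + - ((w - (r * a + s * c) / (s + r))^2) / (2 * (s * r / (s + r))))"
    by (simp only: sq ex)
  also have "\<dots> = normal_density a (sqrt (s + r)) c * normal_density ((r * a + s * c) / (s + r)) (sqrt (s * r / (s + r))) w"
    using s r unfolding exp_add by (simp add: normal_density_def power2_commute[of c a])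
  finally show ?thesis .
qed

lemma conv1:
  fixes s r :: real assumes s: "s > 0" and r: "r > 0"
  shows "(\<integral>\<^sup>+w. ennreal (normal_density a (sqrt s) w * normal_density c (sqrt r) w) \<partial>lborel)
     = ennreal (normal_density a (sqrt (s + r)) c)"
proof -
  have "(\<integral>\<^sup>+w. ennreal (normal_density a (sqrt s) w * normal_density c (sqrt r) w) \<partial>lborel)
    = (\<integral>\<^sup>+w. ennreal (normal_density a (sqrt (s + r)) c) * ennreal (normal_density ((r * a + s * c) / (s + r)) (sqrt (s * r / (s + r))) w) \<partial>lborel)"
    by (intro nn_integral_cong) (simp add: normal_prod_identity[OF s r] ennreal_mult')
  also have "\<dots> = ennreal (normal_density a (sqrt (s + r)) c) * (\<integral>\<^sup>+w. ennreal (normal_density ((r * a + s * c) / (s + r)) (sqrt (s * r / (s + r))) w) \<partial>lborel)"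
    by (rule nn_integral_cmult) simp
  also have "(\<integral>\<^sup>+w. ennreal (normal_density ((r * a + s * c) / (s + r)) (sqrt (s * r / (s + r))) w) \<partial>lborel) = 1"
    using s r by (subst nn_integral_eq_integral) (auto intro!: integrable_normal_density simp: integral_normal_density)
  finally show ?thesis by simp
qed

lemma heat_nn_integral:
  fixes x :: "real^'n" assumes s: "s > 0"
  shows "(\<integral>\<^sup>+z. ennreal (heat_kernel s x z) \<partial>lborel) = 1"
proof -
  have "(\<integral>\<^sup>+z. ennreal (heat_kernel s x z) \<partial>lborel) =
     (\<integral>\<^sup>+z. (\<Prod>b\<in>Basis. ennreal (normal_density (x \<bullet> b) (sqrt s) (z \<bullet> b))) \<partial>lborel)"
    by (intro nn_integral_cong) (simp add: heat_kernel_prod[OF s] prod_ennreal)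
  also have "\<dots> = (\<Prod>b\<in>(Basis::(real^'n) set). (\<integral>\<^sup>+w. ennreal (normal_density (x \<bullet> b) (sqrt s) w) \<partial>lborel))"
    by (rule nn_integral_lborel_prod) auto
  also have "\<dots> = 1"
    by (intro prod.neutral ballI) (subst nn_integral_eq_integral, auto intro!: integrable_normal_density simp: integral_normal_density s)
  finally show ?thesis .
qed

lemma heat_conv_nn:
  fixes x y :: "real^'n" assumes s: "s > 0" and r: "r > 0"
  shows "(\<integral>\<^sup>+z. ennreal (heat_kernel s x z * heat_kernel r y z) \<partial>lborel) = ennreal (heat_kernel (s + r) x y)"
proof -
  have "(\<integral>\<^sup>+z. ennreal (heat_kernel s x z * heat_kernel r y z) \<partial>lborel) =
     (\<integral>\<^sup>+z. (\<Prod>b\<in>Basis. ennreal (normal_density (x \<bullet> b) (sqrt s) (z \<bullet> b) * normal_density (y \<bullet> b) (sqrt r) (z \<bullet> b))) \<partial>lborel)"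
    by (intro nn_integral_cong) (simp add: heat_kernel_prod[OF s] heat_kernel_prod[OF r] prod_ennreal prod.distrib)
  also have "\<dots> = (\<Prod>b\<in>(Basis::(real^'n) set). (\<integral>\<^sup>+w. ennreal (normal_density (x \<bullet> b) (sqrt s) w * normal_density (y \<bullet> b) (sqrt r) w) \<partial>lborel))"
    by (rule nn_integral_lborel_prod) auto
  also have "\<dots> = (\<Prod>b\<in>(Basis::(real^'n) set). ennreal (normal_density (x \<bullet> b) (sqrt (s + r)) (y \<bullet> b)))"
    by (intro prod.cong refl conv1 s r)
  also have "\<dots> = ennreal (heat_kernel (s + r) x y)"
    using s r by (simp add: heat_kernel_prod prod_ennreal)
  finally show ?thesis .
qed



lemma heat_nonneg: "heat_kernel s x z \<ge> 0"
  unfolding heat_kernel_def by simp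

lemma heat_meas[measurable]: "heat_kernel s (x::real^'n) \<in> borel_measurable borel"
  unfolding heat_kernel_def by measurable

lemma heat_meas2[measurable]: "(\<lambda>z. heat_kernel s (z::real^'n) x) \<in> borel_measurable borel"
  unfolding heat_kernel_def by measurable

lemma heat_integrable:
  fixes x :: "real^'n" assumes s: "s > 0"
  shows "integrable lborel (heat_kernel s x)" and "(\<integral>z. heat_kernel s x z \<partial>lborel) = 1"
proof -
  show "integrable lborel (heat_kernel s x)"
    using heat_nn_integral[OF s, of x] by (intro integrableI_nonneg) (auto simp: heat_nonneg)
  then show "(\<integral>z. heat_kernel s x z \<partial>lborel) = 1"
    using heat_nn_integral[OF s, of x] by (subst (asm) nn_integral_eq_integral) (auto simp: heat_nonneg)
qed

lemma heat_conv:
  fixes x y :: "real^'n" assumes s: "s > 0" and r: "r > 0"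
  shows "integrable lborel (\<lambda>z. heat_kernel s x z * heat_kernel r y z)"
    and "(\<integral>z. heat_kernel s x z * heat_kernel r y z \<partial>lborel) = heat_kernel (s + r) x y"
proof -
  show i: "integrable lborel (\<lambda>z. heat_kernel s x z * heat_kernel r y z)"
    using heat_conv_nn[OF s r, of x y] by (intro integrableI_nonneg) (auto simp: heat_nonneg)
  have "ennreal (\<integral>z. heat_kernel s x z * heat_kernel r y z \<partial>lborel) = ennreal (heat_kernel (s + r) x y)"
    using heat_conv_nn[OF s r, of x y] i by (subst nn_integral_eq_integral[symmetric]) (auto simp: heat_nonneg)
  then show "(\<integral>z. heat_kernel s x z * heat_kernel r y z \<partial>lborel) = heat_kernel (s + r) x y"
    using heat_nonneg by (subst (asm) ennreal_inj) (auto intro!: integral_nonneg_AE simp: heat_nonneg)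
qed

lemma heat_bound:
  fixes x z :: "real^'n"
  assumes s: "s > 0"
  shows "heat_kernel s x z \<le> (2 * pi * s) powr (- real CARD('n) / 2)"
  unfolding heat_kernel_def
  using s by (intro mult_left_le) auto

lemma heat_bound_mono:
  assumes s: "s > 0" and "s \<le> s'"
  shows "heat_kernel s' (x::real^'n) z \<le> (2 * pi * s) powr (- real CARD('n) / 2)"
proof -
  have "heat_kernel s' x z \<le> (2 * pi * s') powr (- real CARD('n) / 2)"
    using assms by (intro heat_bound) auto
  also have "\<dots> \<le> (2 * pi * s) powr (- real CARD('n) / 2)"
    using assms by (intro powr_mono2') auto
  finally show ?thesis .
qed

lemma integrable_bounded_heat:
  fixes f :: "real^'n \<Rightarrow> real"
  assumes f[measurable]: "f \<in> borel_measurable lborel" and B: "\<And>z. \<bar>f z\<bar> \<le> B" and s: "s > 0"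
  shows "integrable lborel (\<lambda>z. f z * heat_kernel s y z)"
proof (rule Bochner_Integration.integrable_bound[where f="\<lambda>z. B * heat_kernel s y z"])
  show "integrable lborel (\<lambda>z. B * heat_kernel s y z)"
    by (rule integrable_mult_right) (rule heat_integrable(1)[OF s])
  show "(\<lambda>z. f z * heat_kernel s y z) \<in> borel_measurable lborel" by measurable
  show "AE z in lborel. norm (f z * heat_kernel s y z) \<le> norm (B * heat_kernel s y z)"
  proof (intro AE_I2)
    fix z
    have "\<bar>f z\<bar> * heat_kernel s y z \<le> B * heat_kernel s y z"
      using B[of z] heat_nonneg[of s y z] by (intro mult_right_mono) auto
    then show "norm (f z * heat_kernel s y z) \<le> norm (B * heat_kernel s y z)"
      using heat_nonneg[of s y z] B[of z] by (simp add: abs_mult)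
  qed
qed

lemma integral_bounded_heat:
  fixes f :: "real^'n \<Rightarrow> real"
  assumes f[measurable]: "f \<in> borel_measurable lborel" and B: "\<And>z. \<bar>f z\<bar> \<le> B" and s: "s > 0"
  shows "\<bar>\<integral>z. f z * heat_kernel s y z \<partial>lborel\<bar> \<le> B"
proof -
  have "\<bar>\<integral>z. f z * heat_kernel s y z \<partial>lborel\<bar> \<le> (\<integral>z. \<bar>f z * heat_kernel s y z\<bar> \<partial>lborel)"
    by (rule integral_abs_bound)
  also have "\<dots> \<le> (\<integral>z. B * heat_kernel s y z \<partial>lborel)"
  proof (intro integral_mono)
    show "integrable lborel (\<lambda>z. \<bar>f z * heat_kernel s y z\<bar>)"
      using integrable_bounded_heat[OF f B s] by (rule integrable_abs)
    show "integrable lborel (\<lambda>z. B * heat_kernel s y z)" by (rule integrable_mult_right) (rule heat_integrable(1)[OF s])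
    fix z
    have "\<bar>f z\<bar> * heat_kernel s y z \<le> B * heat_kernel s y z"
      using B[of z] heat_nonneg[of s y z] by (intro mult_right_mono) auto
    then show "\<bar>f z * heat_kernel s y z\<bar> \<le> B * heat_kernel s y z"
      using heat_nonneg[of s y z] by (simp add: abs_mult)
  qed
  also have "\<dots> = B" using heat_integrable(2)[OF s, of y] by (simp only: integral_mult_right_zero)
  finally show ?thesis .
qed

lemma gen_L_formula:
  fixes f :: "real^'n \<Rightarrow> real"
  assumes f[measurable]: "f \<in> borel_measurable lborel" and B: "\<And>z. \<bar>f z\<bar> \<le> B" and th: "\<theta> > 0"
  shows "gen_L \<theta> f y = \<theta> * ((\<integral>z. f z * heat_kernel (1 / \<theta>) y z \<partial>lborel) - f y)"
proof -
  have s: "1 / \<theta> > 0" using th by simp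
  have "(\<integral>z. (f z - f y) * heat_kernel (1 / \<theta>) y z \<partial>lborel) =
        (\<integral>z. f z * heat_kernel (1 / \<theta>) y z - f y * heat_kernel (1 / \<theta>) y z \<partial>lborel)"
    by (simp add: algebra_simps)
  also have "\<dots> = (\<integral>z. f z * heat_kernel (1 / \<theta>) y z \<partial>lborel) - (\<integral>z. f y * heat_kernel (1 / \<theta>) y z \<partial>lborel)"
    using integrable_bounded_heat[OF f B s] heat_integrable(1)[OF s]
    by (intro Bochner_Integration.integral_diff) auto
  also have "(\<integral>z. f y * heat_kernel (1 / \<theta>) y z \<partial>lborel) = f y"
    using heat_integrable(2)[OF s, of y] by (simp only: integral_mult_right_zero)
  finally show ?thesis unfolding gen_L_def by simp
qed

lemma gen_L_bound:
  fixes f :: "real^'n \<Rightarrow> real"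
  assumes f[measurable]: "f \<in> borel_measurable lborel" and B: "\<And>z. \<bar>f z\<bar> \<le> B" and th: "\<theta> > 0"
  shows "\<bar>gen_L \<theta> f y\<bar> \<le> 2 * \<theta> * B"
proof -
  have s: "1 / \<theta> > 0" using th by simp
  have "\<bar>\<integral>z. (f z - f y) * heat_kernel (1 / \<theta>) y z \<partial>lborel\<bar> \<le> 2 * B"
  proof (rule integral_bounded_heat[OF _ _ s])
    fix z show "\<bar>f z - f y\<bar> \<le> 2 * B" using B[of z] B[of y] by linarith
  qed simp
  then show ?thesis unfolding gen_L_def using th by (simp add: abs_mult)
qed

lemma gen_L_diff:
  fixes f g :: "real^'n \<Rightarrow> real"
  assumes f[measurable]: "f \<in> borel_measurable lborel" and B: "\<And>z. \<bar>f z\<bar> \<le> B"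
    and g[measurable]: "g \<in> borel_measurable lborel" and B': "\<And>z. \<bar>g z\<bar> \<le> B'" and th: "\<theta> > 0"
  shows "gen_L \<theta> f y - gen_L \<theta> g y = gen_L \<theta> (\<lambda>z. f z - g z) y"
proof -
  have s: "1 / \<theta> > 0" using th by simp
  have B'': "\<bar>f z - g z\<bar> \<le> B + B'" for z using B[of z] B'[of z] by linarith
  have "(\<integral>z. (f z - g z) * heat_kernel (1 / \<theta>) y z \<partial>lborel) =
     (\<integral>z. f z * heat_kernel (1 / \<theta>) y z - g z * heat_kernel (1 / \<theta>) y z \<partial>lborel)"
    by (simp add: algebra_simps)
  also have "\<dots> = (\<integral>z. f z * heat_kernel (1 / \<theta>) y z \<partial>lborel) - (\<integral>z. g z * heat_kernel (1 / \<theta>) y z \<partial>lborel)"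
    using integrable_bounded_heat[OF f B s] integrable_bounded_heat[OF g B' s]
    by (intro Bochner_Integration.integral_diff) auto
  finally have eq: "(\<integral>z. (f z - g z) * heat_kernel (1 / \<theta>) y z \<partial>lborel) =
     (\<integral>z. f z * heat_kernel (1 / \<theta>) y z \<partial>lborel) - (\<integral>z. g z * heat_kernel (1 / \<theta>) y z \<partial>lborel)" .
  have m: "(\<lambda>z. f z - g z) \<in> borel_measurable lborel" by measurable
  show ?thesis
    unfolding gen_L_formula[OF f B th, of y] gen_L_formula[OF g B' th, of y] gen_L_formula[OF m B'' th, of y] eq
    by (simp add: algebra_simps)
qed



lemma deriv_mono0:
  fixes h h' :: "real \<Rightarrow> real"
  assumes t: "0 \<le> t" and d: "\<And>s. s \<in> {0..t} \<Longrightarrow> (h has_real_derivative h' s) (at s within {0..})"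
    and nn: "\<And>s. s \<in> {0..t} \<Longrightarrow> h' s \<ge> 0"
  shows "h 0 \<le> h t"
proof (rule DERIV_nonneg_imp_increasing_open[OF t])
  fix x assume x: "0 < x" "x < t"
  have "interior {0::real..} = {0<..}" by simp
  then have "at x within {0..} = at x" using x by (intro at_within_interior) auto
  then show "\<exists>y. (h has_real_derivative y) (at x) \<and> 0 \<le> y"
    using d[of x] nn[of x] x by auto
next
  show "continuous_on {0..t} h"
  proof (rule continuous_on_eq_continuous_within[THEN iffD2], intro ballI)
    fix x assume x: "x \<in> {0..t}"
    have "continuous (at x within {0..}) h"
      using d[OF x] by (rule DERIV_continuous)
    then show "continuous (at x within {0..t}) h"
      by (rule continuous_within_subset) auto
  qed
qed

lemma deriv_abs_bound:
  fixes f g f' g' :: "real \<Rightarrow> real"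
  assumes t: "0 \<le> t"
    and df: "\<And>s. s \<in> {0..t} \<Longrightarrow> (f has_real_derivative f' s) (at s within {0..})"
    and dg: "\<And>s. s \<in> {0..t} \<Longrightarrow> (g has_real_derivative g' s) (at s within {0..})"
    and b: "\<And>s. s \<in> {0..t} \<Longrightarrow> \<bar>f' s\<bar> \<le> g' s"
    and f0: "f 0 = 0" and g0: "g 0 = 0"
  shows "\<bar>f t\<bar> \<le> g t"
proof -
  have nn: "0 \<le> g' s - f' s" "0 \<le> g' s + f' s" if "s \<in> {0..t}" for s
    using b[OF that] by (auto simp: abs_le_iff)
  have "(\<lambda>s. g s - f s) 0 \<le> (\<lambda>s. g s - f s) t"
    apply (rule deriv_mono0[OF t, where h'="\<lambda>s. g' s - f' s"])
    apply (auto intro!: derivative_eq_intros df dg)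
    using nn by force
  moreover have "(\<lambda>s. g s + f s) 0 \<le> (\<lambda>s. g s + f s) t"
    apply (rule deriv_mono0[OF t, where h'="\<lambda>s. g' s + f' s"])
    apply (auto intro!: derivative_eq_intros df dg)
    using nn by force
  ultimately show ?thesis using f0 g0 by auto
qed

lemma uniqueness:
  fixes \<phi> :: "real \<Rightarrow> real^'n \<Rightarrow> real"
  assumes th: "\<theta> > 0"
    and meas: "\<And>t. t \<ge> 0 \<Longrightarrow> \<phi> t \<in> borel_measurable lborel"
    and bnd: "\<And>T. T \<ge> 0 \<Longrightarrow> \<exists>B. \<forall>t\<in>{0..T}. \<forall>y. \<bar>\<phi> t y\<bar> \<le> B"
    and der: "\<And>t y. t \<ge> 0 \<Longrightarrow> ((\<lambda>s. \<phi> s y) has_real_derivative gen_L \<theta> (\<phi> t) y) (at t within {0..})"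
    and init: "\<And>y. \<phi> 0 y = 0"
    and t: "t \<ge> 0"
  shows "\<phi> t y = 0"
proof -
  obtain B where B: "\<And>s y. s \<in> {0..t} \<Longrightarrow> \<bar>\<phi> s y\<bar> \<le> B" using bnd[OF t] by blast
  have main: "\<forall>s\<in>{0..t}. \<forall>y. \<bar>\<phi> s y\<bar> \<le> B * (2 * \<theta> * s) ^ k / fact k" for k
  proof (induction k)
    case 0 then show ?case using B by simp
  next
    case (Suc k)
    show ?case
    proof (intro ballI allI)
      fix s y assume s: "s \<in> {0..t}"
      define C where "C = B * (2 * \<theta>) ^ Suc k / fact (Suc k)"
      have "\<bar>\<phi> s y\<bar> \<le> C * s ^ Suc k"
      proof (rule deriv_abs_bound[where f="\<lambda>s. \<phi> s y" and f'="\<lambda>s. gen_L \<theta> (\<phi> s) y"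
            and g'="\<lambda>s. 2 * \<theta> * (B * (2 * \<theta> * s) ^ k / fact k)"])
        show "0 \<le> s" using s by simp
        fix r assume r: "r \<in> {0..s}"
        then have r': "r \<in> {0..t}" using s by auto
        show "((\<lambda>s. \<phi> s y) has_real_derivative gen_L \<theta> (\<phi> r) y) (at r within {0..})"
          using der r by auto
        show "\<bar>gen_L \<theta> (\<phi> r) y\<bar> \<le> 2 * \<theta> * (B * (2 * \<theta> * r) ^ k / fact k)"
          using gen_L_bound[OF meas Suc.IH[rule_format, OF r'] th] r by auto
        have eq: "C * (real (Suc k) * r ^ k) = 2 * \<theta> * (B * (2 * \<theta> * r) ^ k / fact k)"
          unfolding C_def by (simp add: power_mult_distrib fact_Suc field_simps del: of_nat_Suc)
        show "((\<lambda>s. C * s ^ Suc k) has_real_derivative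
                 2 * \<theta> * (B * (2 * \<theta> * r) ^ k / fact k)) (at r within {0..})"
          unfolding eq[symmetric] using DERIV_cmult[OF DERIV_pow[of "Suc k" r "{0..}"], of C] by simp
      next
        show "\<phi> 0 y = 0" by (rule init)
      qed simp
      also have "\<dots> = B * (2 * \<theta> * s) ^ Suc k / fact (Suc k)"
        unfolding C_def by (simp add: power_mult_distrib)
      finally show "\<bar>\<phi> s y\<bar> \<le> B * (2 * \<theta> * s) ^ Suc k / fact (Suc k)" .
    qed
  qed
  have lim: "(\<lambda>k. B * ((2 * \<theta> * t) ^ k / fact k)) \<longlonglongrightarrow> B * 0"
  proof (intro tendsto_mult tendsto_const)
    have "summable (\<lambda>k. inverse (fact k) * (2 * \<theta> * t) ^ k)" by (rule summable_exp)
    then show "(\<lambda>k. (2 * \<theta> * t) ^ k / fact k) \<longlonglongrightarrow> 0"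
      by (auto dest: summable_LIMSEQ_zero simp: divide_inverse mult.commute)
  qed
  have "\<bar>\<phi> t y\<bar> \<le> B * 0"
    using lim by (rule LIMSEQ_le_const) (use main t in \<open>auto simp: mult.assoc\<close>)
  then show ?thesis by simp
qed



definition cand :: "real \<Rightarrow> (nat \<Rightarrow> real) \<Rightarrow> real" where
  "cand l a = (\<Sum>k. l ^ k / fact k * exp (- l) * a k)"

lemma summable_exp_bounded:
  fixes a :: "nat \<Rightarrow> real"
  assumes A: "\<And>k. \<bar>a k\<bar> \<le> A"
  shows "summable (\<lambda>k. a k / fact k * l ^ k)"
proof (rule summable_comparison_test'[where g="\<lambda>k. A * (inverse (fact k) * \<bar>l\<bar> ^ k)"])
  show "summable (\<lambda>k. A * (inverse (fact k) * \<bar>l\<bar> ^ k))"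
    by (intro summable_mult summable_exp)
  fix k :: nat
  have "\<bar>a k\<bar> * \<bar>l\<bar> ^ k / fact k \<le> A * \<bar>l\<bar> ^ k / fact k"
    using A[of k] by (intro divide_right_mono mult_right_mono) auto
  then show "norm (a k / fact k * l ^ k) \<le> A * (inverse (fact k) * \<bar>l\<bar> ^ k)"
    by (simp add: abs_mult power_abs divide_inverse mult_ac)
qed

lemma cand_exp:
  fixes a :: "nat \<Rightarrow> real"
  assumes A: "\<And>k. \<bar>a k\<bar> \<le> A"
  shows "cand l a = exp (- l) * (\<Sum>k. a k / fact k * l ^ k)"
proof -
  have s: "summable (\<lambda>k. a k / fact k * l ^ k)" by (rule summable_exp_bounded) (rule A)
  have "exp (- l) * (\<Sum>k. a k / fact k * l ^ k) = (\<Sum>k. exp (- l) * (a k / fact k * l ^ k))"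
    by (rule suminf_mult[OF s, symmetric])
  then show ?thesis unfolding cand_def by (simp add: mult_ac)
qed

lemma cand_summable:
  fixes a :: "nat \<Rightarrow> real"
  assumes A: "\<And>k. \<bar>a k\<bar> \<le> A"
  shows "summable (\<lambda>k. l ^ k / fact k * exp (- l) * a k)"
proof -
  have s: "summable (\<lambda>k. a k / fact k * l ^ k)" by (rule summable_exp_bounded) (rule A)
  then have "summable (\<lambda>k. exp (- l) * (a k / fact k * l ^ k))" by (rule summable_mult)
  then show ?thesis by (simp add: mult_ac)
qed

lemma cand_zero: "cand 0 a = a 0"
proof -
  have "(\<lambda>k. (0::real) ^ k / fact k * exp (- 0) * a k) = (\<lambda>k. if k = 0 then a k else 0)"
    by (auto simp: fun_eq_iff)
  then show ?thesis unfolding cand_def using sums_single[of 0 a] by (simp add: sums_iff)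
qed

lemma cand_weights: "(\<Sum>k. (l::real) ^ k / fact k * exp (- l)) = 1"
proof -
  have ss: "(\<lambda>k. l ^ k / fact k) sums exp l"
    using exp_converges[of l] by (simp add: divide_inverse mult.commute real_scaleR_def)
  then have "(\<Sum>k. l ^ k / fact k) = exp l" by (simp add: sums_iff)
  moreover have "summable (\<lambda>k. l ^ k / fact k)" using ss by (simp add: sums_iff)
  ultimately show ?thesis
    by (subst suminf_mult2[symmetric]) (auto simp: exp_minus field_simps)
qed

lemma cand_bound:
  fixes a :: "nat \<Rightarrow> real"
  assumes A: "\<And>k. 0 \<le> a k" "\<And>k. a k \<le> A" and l: "l \<ge> 0"
  shows "0 \<le> cand l a" "cand l a \<le> A"
proof -
  have A': "\<And>k. \<bar>a k\<bar> \<le> A" using A by auto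
  show "0 \<le> cand l a" unfolding cand_def
    using A l by (intro suminf_nonneg cand_summable[OF A']) auto
  have s1: "summable (\<lambda>k. l ^ k / fact k * exp (- l) * A)"
    by (rule cand_summable[of "\<lambda>_. A" "\<bar>A\<bar>"]) simp
  have "cand l a \<le> (\<Sum>k. l ^ k / fact k * exp (- l) * A)"
    unfolding cand_def using A l by (intro suminf_le cand_summable[OF A'] s1) (auto intro!: divide_right_mono mult_left_mono)
  also have "\<dots> = (\<Sum>k. l ^ k / fact k * exp (- l)) * A"
    using cand_summable[of "\<lambda>_. 1" 1 l] by (intro suminf_mult2[symmetric]) simp
  also have "\<dots> = A" using cand_weights[of l] by simp
  finally show "cand l a \<le> A" .
qed

lemma cand_deriv:
  fixes a :: "nat \<Rightarrow> real"
  assumes A: "\<And>k. \<bar>a k\<bar> \<le> A"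
  shows "((\<lambda>t. cand (\<theta> * t) a) has_real_derivative \<theta> * (cand (\<theta> * t) (\<lambda>k. a (Suc k)) - cand (\<theta> * t) a)) (at t within S)"
proof -
  define c where "c k = a k / fact k" for k
  have sc: "\<And>z. summable (\<lambda>k. c k * z ^ k)" unfolding c_def by (rule summable_exp_bounded) (rule A)
  have dc: "diffs c = (\<lambda>k. a (Suc k) / fact k)"
    unfolding diffs_def c_def by (auto simp: fun_eq_iff fact_Suc field_simps simp del: of_nat_Suc)
  have A2: "\<And>k. \<bar>a (Suc k)\<bar> \<le> A" using A by auto
  have F: "((\<lambda>z. \<Sum>k. c k * z ^ k) has_real_derivative (\<Sum>k. a (Suc k) / fact k * z ^ k)) (at z)" for z
    using termdiffs_strong_converges_everywhere[OF sc, of z] unfolding dc .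
  have eq: "(\<lambda>t. cand (\<theta> * t) a) = (\<lambda>t. exp (- (\<theta> * t)) * (\<Sum>k. c k * (\<theta> * t) ^ k))"
    unfolding c_def using cand_exp[OF A] by auto
  have e: "((\<lambda>t. exp (- (\<theta> * t))) has_real_derivative exp (- (\<theta> * t)) * - \<theta>) (at t within S)"
    by (auto intro!: derivative_eq_intros)
  have m: "((*) \<theta> has_real_derivative \<theta>) (at t within S)"
    by (auto intro!: derivative_eq_intros)
  have G: "((\<lambda>t. (\<Sum>k. c k * (\<theta> * t) ^ k)) has_real_derivative (\<Sum>k. a (Suc k) / fact k * (\<theta> * t) ^ k) * \<theta>) (at t within S)"
    using DERIV_chain2[OF F m] .
  have "((\<lambda>t. exp (- (\<theta> * t)) * (\<Sum>k. c k * (\<theta> * t) ^ k)) has_real_derivative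
     \<theta> * (cand (\<theta> * t) (\<lambda>k. a (Suc k)) - cand (\<theta> * t) a)) (at t within S)"
  proof (rule DERIV_cong[OF DERIV_mult[OF e G]])
    show "exp (- (\<theta> * t)) * - \<theta> * (\<Sum>k. c k * (\<theta> * t) ^ k) +
      (\<Sum>k. a (Suc k) / fact k * (\<theta> * t) ^ k) * \<theta> * exp (- (\<theta> * t)) =
      \<theta> * (cand (\<theta> * t) (\<lambda>k. a (Suc k)) - cand (\<theta> * t) a)"
      unfolding cand_exp[OF A] cand_exp[OF A2] c_def by (simp add: algebra_simps)
  qed
  then show ?thesis unfolding eq .
qed



definition ak :: "real \<Rightarrow> real \<Rightarrow> real^'n \<Rightarrow> nat \<Rightarrow> real^'n \<Rightarrow> real" where
  "ak \<epsilon> \<theta> x k y = heat_kernel (\<epsilon>^2 + real k / \<theta>) x y"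

definition uc :: "real \<Rightarrow> real \<Rightarrow> real^'n \<Rightarrow> real \<Rightarrow> real^'n \<Rightarrow> real" where
  "uc \<epsilon> \<theta> x t y = cand (\<theta> * t) (\<lambda>k. ak \<epsilon> \<theta> x k y)"

lemma ak_nonneg: "0 \<le> ak \<epsilon> \<theta> x k y"
  unfolding ak_def by (rule heat_nonneg)

lemma ak_le:
  assumes "\<epsilon> > 0" "\<theta> > 0"
  shows "ak \<epsilon> \<theta> (x::real^'n) k y \<le> (2 * pi * \<epsilon>^2) powr (- real CARD('n) / 2)"
  unfolding ak_def using assms by (intro heat_bound_mono) auto

lemma ak_abs:
  assumes "\<epsilon> > 0" "\<theta> > 0"
  shows "\<bar>ak \<epsilon> \<theta> (x::real^'n) k y\<bar> \<le> (2 * pi * \<epsilon>^2) powr (- real CARD('n) / 2)"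
  using ak_le[OF assms, of x k y] ak_nonneg[of \<epsilon> \<theta> x k y] by (simp add: abs_of_nonneg)

lemma uc_bound:
  assumes "\<epsilon> > 0" "\<theta> > 0" "t \<ge> 0"
  shows "0 \<le> uc \<epsilon> \<theta> (x::real^'n) t y" "uc \<epsilon> \<theta> x t y \<le> (2 * pi * \<epsilon>^2) powr (- real CARD('n) / 2)"
proof -
  have l: "0 \<le> \<theta> * t" using assms by simp
  show "0 \<le> uc \<epsilon> \<theta> (x::real^'n) t y"
    unfolding uc_def by (rule cand_bound(1)[OF _ _ l]) (rule ak_nonneg, rule ak_le[OF assms(1,2)])
  show "uc \<epsilon> \<theta> x t y \<le> (2 * pi * \<epsilon>^2) powr (- real CARD('n) / 2)"
    unfolding uc_def by (rule cand_bound(2)[OF _ _ l]) (rule ak_nonneg, rule ak_le[OF assms(1,2)])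
qed

lemma uc_abs:
  assumes "\<epsilon> > 0" "\<theta> > 0" "t \<ge> 0"
  shows "\<bar>uc \<epsilon> \<theta> (x::real^'n) t y\<bar> \<le> (2 * pi * \<epsilon>^2) powr (- real CARD('n) / 2)"
  using uc_bound[OF assms, of x y] by simp

lemma ak_meas[measurable]: "ak \<epsilon> \<theta> x k \<in> borel_measurable lborel"
  unfolding ak_def by measurable

lemma uc_meas[measurable]: "uc \<epsilon> \<theta> x t \<in> borel_measurable lborel"
  unfolding uc_def cand_def by measurable

lemma uc_zero: "uc \<epsilon> \<theta> x 0 y = heat_kernel (\<epsilon>^2) x y"
  unfolding uc_def by (simp add: cand_zero ak_def)

lemma uc_conv:
  assumes e: "\<epsilon> > 0" and th: "\<theta> > 0" and t: "t \<ge> 0"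
  shows "(\<integral>z. uc \<epsilon> \<theta> (x::real^'n) t z * heat_kernel (1 / \<theta>) y z \<partial>lborel) = cand (\<theta> * t) (\<lambda>k. ak \<epsilon> \<theta> x (Suc k) y)"
proof -
  define l where "l = \<theta> * t"
  have l: "l \<ge> 0" using th t by (simp add: l_def)
  define w where "w k = l ^ k / fact k * exp (- l)" for k
  have w: "w k \<ge> 0" for k using l by (simp add: w_def)
  define A where "A = (2 * pi * \<epsilon>^2) powr (- real CARD('n) / 2)"
  have A: "\<And>k z. \<bar>ak \<epsilon> \<theta> x k z\<bar> \<le> A" unfolding A_def by (rule ak_abs[OF e th])
  have s1: "1 / \<theta> > 0" using th by simp
  have int: "integrable lborel (\<lambda>z. uc \<epsilon> \<theta> x t z * heat_kernel (1 / \<theta>) y z)"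
    by (rule integrable_bounded_heat[OF uc_meas uc_abs[OF e th t] s1])
  have nn: "0 \<le> uc \<epsilon> \<theta> x t z * heat_kernel (1 / \<theta>) y z" for z
    using uc_bound(1)[OF e th t, of x z] heat_nonneg[of "1 / \<theta>" y z] by simp
  have pw: "ennreal (uc \<epsilon> \<theta> x t z * heat_kernel (1 / \<theta>) y z) =
        (\<Sum>k. ennreal (w k * (ak \<epsilon> \<theta> x k z * heat_kernel (1 / \<theta>) y z)))" for z
  proof -
    have sm: "summable (\<lambda>k. w k * ak \<epsilon> \<theta> x k z)"
      unfolding w_def by (rule cand_summable) (rule A)
    have "uc \<epsilon> \<theta> x t z * heat_kernel (1 / \<theta>) y z = (\<Sum>k. w k * ak \<epsilon> \<theta> x k z * heat_kernel (1 / \<theta>) y z)"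
      unfolding uc_def cand_def w_def l_def by (rule suminf_mult2) (use sm in \<open>simp add: w_def l_def\<close>)
    also have "ennreal \<dots> = (\<Sum>k. ennreal (w k * ak \<epsilon> \<theta> x k z * heat_kernel (1 / \<theta>) y z))"
      by (rule suminf_ennreal2[symmetric])
         (auto intro!: mult_nonneg_nonneg w ak_nonneg heat_nonneg summable_mult2 sm)
    finally show ?thesis by (simp add: mult.assoc)
  qed
  have "ennreal (\<integral>z. uc \<epsilon> \<theta> x t z * heat_kernel (1 / \<theta>) y z \<partial>lborel)
      = (\<integral>\<^sup>+z. ennreal (uc \<epsilon> \<theta> x t z * heat_kernel (1 / \<theta>) y z) \<partial>lborel)"
    using int nn by (subst nn_integral_eq_integral) auto
  also have "\<dots> = (\<integral>\<^sup>+z. (\<Sum>k. ennreal (w k * (ak \<epsilon> \<theta> x k z * heat_kernel (1 / \<theta>) y z))) \<partial>lborel)"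
    by (simp only: pw)
  also have "\<dots> = (\<Sum>k. \<integral>\<^sup>+z. ennreal (w k * (ak \<epsilon> \<theta> x k z * heat_kernel (1 / \<theta>) y z)) \<partial>lborel)"
    by (rule nn_integral_suminf) measurable
  also have "\<dots> = (\<Sum>k. ennreal (w k * ak \<epsilon> \<theta> x (Suc k) y))"
  proof (intro suminf_cong)
    fix k
    have ek: "\<epsilon>^2 + real k / \<theta> > 0" using e th by (simp add: add_pos_nonneg)
    have "(\<integral>\<^sup>+z. ennreal (w k * (ak \<epsilon> \<theta> x k z * heat_kernel (1 / \<theta>) y z)) \<partial>lborel)
        = ennreal (w k) * (\<integral>\<^sup>+z. ennreal (ak \<epsilon> \<theta> x k z * heat_kernel (1 / \<theta>) y z) \<partial>lborel)"
      using w[of k] by (subst nn_integral_cmult[symmetric]) (auto simp: ennreal_mult' ak_nonneg heat_nonneg)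
    also have "(\<integral>\<^sup>+z. ennreal (ak \<epsilon> \<theta> x k z * heat_kernel (1 / \<theta>) y z) \<partial>lborel)
        = ennreal (heat_kernel (\<epsilon>^2 + real k / \<theta> + 1 / \<theta>) x y)"
      unfolding ak_def by (rule heat_conv_nn[OF ek s1])
    also have "\<epsilon>^2 + real k / \<theta> + 1 / \<theta> = \<epsilon>^2 + real (Suc k) / \<theta>"
      using th by (simp add: field_simps)
    finally show "(\<integral>\<^sup>+z. ennreal (w k * (ak \<epsilon> \<theta> x k z * heat_kernel (1 / \<theta>) y z)) \<partial>lborel)
        = ennreal (w k * ak \<epsilon> \<theta> x (Suc k) y)"
      using w[of k] by (simp add: ak_def ennreal_mult')
  qed
  also have "\<dots> = ennreal (\<Sum>k. w k * ak \<epsilon> \<theta> x (Suc k) y)"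
  proof (rule suminf_ennreal2)
    show "summable (\<lambda>k. w k * ak \<epsilon> \<theta> x (Suc k) y)"
      unfolding w_def by (rule cand_summable) (rule A)
  qed (auto intro!: mult_nonneg_nonneg w ak_nonneg)
  finally have "ennreal (\<integral>z. uc \<epsilon> \<theta> x t z * heat_kernel (1 / \<theta>) y z \<partial>lborel) = ennreal (cand (\<theta> * t) (\<lambda>k. ak \<epsilon> \<theta> x (Suc k) y))"
    unfolding cand_def w_def l_def .
  moreover have n1: "0 \<le> (\<integral>z. uc \<epsilon> \<theta> x t z * heat_kernel (1 / \<theta>) y z \<partial>lborel)"
    by (rule integral_nonneg_AE) (use nn in auto)
  moreover have n2: "0 \<le> cand (\<theta> * t) (\<lambda>k. ak \<epsilon> \<theta> x (Suc k) y)"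
    by (rule cand_bound(1)[OF _ _ l[unfolded l_def]]) (rule ak_nonneg, rule ak_le[OF e th])
  ultimately show ?thesis using ennreal_inj[OF n1 n2] by simp
qed

lemma uc_gen:
  assumes e: "\<epsilon> > 0" and th: "\<theta> > 0" and t: "t \<ge> 0"
  shows "gen_L \<theta> (uc \<epsilon> \<theta> (x::real^'n) t) y = \<theta> * (cand (\<theta> * t) (\<lambda>k. ak \<epsilon> \<theta> x (Suc k) y) - uc \<epsilon> \<theta> x t y)"
  using gen_L_formula[OF uc_meas[of \<epsilon> \<theta> x t] uc_abs[OF e th t, of x] th, of y] uc_conv[OF e th t, of x y] by simp

lemma uc_deriv:
  assumes e: "\<epsilon> > 0" and th: "\<theta> > 0" and t: "t \<ge> 0"
  shows "((\<lambda>s. uc \<epsilon> \<theta> (x::real^'n) s y) has_real_derivative gen_L \<theta> (uc \<epsilon> \<theta> x t) y) (at t within S)"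
  unfolding uc_gen[OF e th t] unfolding uc_def
  by (rule cand_deriv) (rule ak_abs[OF e th])



lemma psi_eq_uc:
  fixes \<psi> :: "real \<Rightarrow> real^'n \<Rightarrow> real"
  assumes e: "\<epsilon> > 0" and th: "\<theta> > 0" and sol: "solves_generator_eq \<theta> (heat_kernel (\<epsilon>^2) x) \<psi>"
    and t: "t \<ge> 0"
  shows "\<psi> t y = uc \<epsilon> \<theta> x t y"
proof -
  define A where "A = (2 * pi * \<epsilon>^2) powr (- real CARD('n) / 2)"
  have uA: "\<And>s z. s \<ge> 0 \<Longrightarrow> \<bar>uc \<epsilon> \<theta> x s z\<bar> \<le> A" unfolding A_def by (rule uc_abs[OF e th])
  have p0: "\<psi> 0 = heat_kernel (\<epsilon>^2) x"
    and pm: "\<And>t. t \<ge> 0 \<Longrightarrow> \<psi> t \<in> borel_measurable lborel"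
    and pb: "\<And>T. T \<ge> 0 \<Longrightarrow> \<exists>B. \<forall>t\<in>{0..T}. \<forall>y. \<bar>\<psi> t y\<bar> \<le> B"
    and pd: "\<And>t y. t \<ge> 0 \<Longrightarrow> ((\<lambda>s. \<psi> s y) has_real_derivative gen_L \<theta> (\<psi> t) y) (at t within {0..})"
    using sol unfolding solves_generator_eq_def by auto
  have "(\<lambda>s z. \<psi> s z - uc \<epsilon> \<theta> x s z) t y = 0"
  proof (rule uniqueness[OF th _ _ _ _ t])
    fix s :: real assume s: "s \<ge> 0"
    show "(\<lambda>z. \<psi> s z - uc \<epsilon> \<theta> x s z) \<in> borel_measurable lborel"
      using pm[OF s] by measurable
  next
    fix T :: real assume T: "T \<ge> 0"
    obtain B where B: "\<forall>t\<in>{0..T}. \<forall>y. \<bar>\<psi> t y\<bar> \<le> B" using pb[OF T] by blast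
    show "\<exists>B. \<forall>t\<in>{0..T}. \<forall>y. \<bar>\<psi> t y - uc \<epsilon> \<theta> x t y\<bar> \<le> B"
    proof (intro exI ballI allI)
      fix s z assume s: "s \<in> {0..T}"
      have h1: "\<bar>\<psi> s z\<bar> \<le> B" using B s by auto
      have h2: "\<bar>uc \<epsilon> \<theta> x s z\<bar> \<le> A" using uA[of s z] s by auto
      show "\<bar>\<psi> s z - uc \<epsilon> \<theta> x s z\<bar> \<le> B + A"
        using h1 h2 unfolding abs_le_iff by linarith
    qed
  next
    fix s :: real and z assume s: "s \<ge> 0"
    obtain B where B: "\<forall>t\<in>{0..s}. \<forall>y. \<bar>\<psi> t y\<bar> \<le> B" using pb[OF s] by blast
    have Bs: "\<And>y. \<bar>\<psi> s y\<bar> \<le> B" using B s by auto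
    have "gen_L \<theta> (\<psi> s) z - gen_L \<theta> (uc \<epsilon> \<theta> x s) z = gen_L \<theta> (\<lambda>y. \<psi> s y - uc \<epsilon> \<theta> x s y) z"
      by (rule gen_L_diff[OF pm[OF s] Bs uc_meas uA[OF s] th])
    moreover have "((\<lambda>s. \<psi> s z - uc \<epsilon> \<theta> x s z) has_real_derivative
        gen_L \<theta> (\<psi> s) z - gen_L \<theta> (uc \<epsilon> \<theta> x s) z) (at s within {0..})"
      by (intro DERIV_diff pd[OF s] uc_deriv[OF e th s])
    ultimately show "((\<lambda>s. \<psi> s z - uc \<epsilon> \<theta> x s z) has_real_derivative
        gen_L \<theta> (\<lambda>y. \<psi> s y - uc \<epsilon> \<theta> x s y) z) (at s within {0..})"
      by simp
  next
    fix z show "\<psi> 0 z - uc \<epsilon> \<theta> x 0 z = 0" using p0 uc_zero[of \<epsilon> \<theta> x z] by simp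
  qed
  then show ?thesis by simp
qed

lemma poisson_integral:
  fixes g :: "nat \<Rightarrow> real"
  assumes g: "\<And>k. 0 \<le> g k" "\<And>k. g k \<le> A" and r: "r > 0"
  shows "(\<integral>k. g k \<partial>measure_pmf (poisson_pmf r)) = cand r g"
proof -
  have int: "integrable (measure_pmf (poisson_pmf r)) g"
    by (rule measure_pmf.integrable_const_bound[where B=A]) (use g in auto)
  have gA: "\<And>k. \<bar>g k\<bar> \<le> A" using g by (simp add: abs_of_nonneg)
  have sm: "summable (\<lambda>k. r ^ k / fact k * exp (- r) * g k)"
    by (rule cand_summable) (rule gA)
  have "ennreal (\<integral>k. g k \<partial>measure_pmf (poisson_pmf r)) = (\<integral>\<^sup>+k. ennreal (g k) \<partial>measure_pmf (poisson_pmf r))"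
    using int g by (subst nn_integral_eq_integral) auto
  also have "\<dots> = (\<integral>\<^sup>+k. ennreal (pmf (poisson_pmf r) k) * ennreal (g k) \<partial>count_space UNIV)"
    by (rule nn_integral_measure_pmf)
  also have "\<dots> = (\<Sum>k. ennreal (r ^ k / fact k * exp (- r) * g k))"
    using r by (simp add: nn_integral_count_space_nat ennreal_mult[symmetric] g)
  also have "\<dots> = ennreal (\<Sum>k. r ^ k / fact k * exp (- r) * g k)"
    by (rule suminf_ennreal2) (use g sm r in auto)
  finally have "ennreal (\<integral>k. g k \<partial>measure_pmf (poisson_pmf r)) = ennreal (cand r g)"
    unfolding cand_def .
  moreover have n1: "0 \<le> (\<integral>k. g k \<partial>measure_pmf (poisson_pmf r))"
    by (rule integral_nonneg_AE) (use g in auto)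
  moreover have n2: "0 \<le> cand r g"
    by (rule cand_bound(1)[OF g]) (use r in auto)
  ultimately show ?thesis using ennreal_inj[OF n1 n2] by simp
qed

lemma poisson_expect:
  fixes x y :: "real^'n" and M :: "'a measure"
  assumes e: "\<epsilon> > 0" and th: "\<theta> > 0" and P: "rate_one_poisson_process M N" and t: "t \<ge> 0"
  shows "(\<integral>\<omega>. heat_kernel (\<epsilon>^2 + real (N (\<theta> * t) \<omega>) / \<theta>) x y \<partial>M) = uc \<epsilon> \<theta> x t y"
proof -
  have ps: "prob_space M"
    and Nm: "\<And>s. s \<ge> 0 \<Longrightarrow> N s \<in> measurable M (count_space UNIV)"
    and N0: "\<And>\<omega>. \<omega> \<in> space M \<Longrightarrow> N 0 \<omega> = 0"
    and Nd: "\<And>s t. 0 \<le> s \<Longrightarrow> s < t \<Longrightarrow>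
        distr M (count_space UNIV) (\<lambda>\<omega>. N t \<omega> - N s \<omega>) = measure_pmf (poisson_pmf (t - s))"
    using P unfolding rate_one_poisson_process_def by auto
  define g where "g k = ak \<epsilon> \<theta> x k y" for k
  have gA: "\<And>k. 0 \<le> g k" "\<And>k. g k \<le> (2 * pi * \<epsilon>^2) powr (- real CARD('n) / 2)"
    unfolding g_def by (rule ak_nonneg, rule ak_le[OF e th])
  have eqi: "(\<integral>\<omega>. heat_kernel (\<epsilon>^2 + real (N (\<theta> * t) \<omega>) / \<theta>) x y \<partial>M) = (\<integral>\<omega>. g (N (\<theta> * t) \<omega>) \<partial>M)"
    unfolding g_def ak_def ..
  show ?thesis
  proof (cases "t = 0")
    case True
    have "(\<integral>\<omega>. g (N (\<theta> * t) \<omega>) \<partial>M) = (\<integral>\<omega>. g 0 \<partial>M)"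
      using N0 True by (intro Bochner_Integration.integral_cong) auto
    also have "\<dots> = g 0" using prob_space.prob_space[OF ps] by simp
    finally show ?thesis using True eqi by (simp add: uc_zero g_def ak_def)
  next
    case False
    then have r: "\<theta> * t > 0" using th t by simp
    have "distr M (count_space UNIV) (N (\<theta> * t)) = distr M (count_space UNIV) (\<lambda>\<omega>. N (\<theta> * t) \<omega> - N 0 \<omega>)"
      by (rule distr_cong) (auto simp: N0)
    also have "\<dots> = measure_pmf (poisson_pmf (\<theta> * t))"
      using Nd[of 0 "\<theta> * t"] r by simp
    finally have D: "distr M (count_space UNIV) (N (\<theta> * t)) = measure_pmf (poisson_pmf (\<theta> * t))" .
    have "(\<integral>\<omega>. g (N (\<theta> * t) \<omega>) \<partial>M) = (\<integral>k. g k \<partial>distr M (count_space UNIV) (N (\<theta> * t)))"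
      using Nm[of "\<theta> * t"] r by (subst integral_distr) auto
    also have "\<dots> = cand (\<theta> * t) g" unfolding D by (rule poisson_integral[OF gA r])
    moreover have "g = (\<lambda>k. ak \<epsilon> \<theta> x k y)" by (simp add: fun_eq_iff g_def)
    ultimately show ?thesis using eqi by (simp add: uc_def)
  qed
qed



lemma fact_shift_le: "fact (k + D) \<le> (fact k :: real) * (real k + real D) ^ D"
proof (induction D)
  case 0 then show ?case by simp
next
  case (Suc D)
  have "fact (k + Suc D) = (real k + real D + 1) * (fact (k + D) :: real)"
    by (simp add: algebra_simps)
  also have "\<dots> \<le> (real k + real D + 1) * (fact k * (real k + real D) ^ D)"
    by (intro mult_left_mono Suc.IH) auto
  also have "\<dots> \<le> (real k + real D + 1) * (fact k * (real k + real D + 1) ^ D)"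
    by (intro mult_left_mono power_mono) auto
  also have "\<dots> = fact k * (real k + real (Suc D)) ^ Suc D"
    by (simp add: algebra_simps)
  finally show ?case .
qed

lemma exp_tail_le:
  fixes l :: real assumes l: "l \<ge> 0"
  shows "summable (\<lambda>k. l ^ (k + D) / fact (k + D))" "(\<Sum>k. l ^ (k + D) / fact (k + D)) \<le> exp l"
proof -
  have ss: "(\<lambda>k. l ^ k / fact k) sums exp l"
    using exp_converges[of l] by (simp add: divide_inverse mult.commute)
  then have sm: "summable (\<lambda>k. l ^ k / fact k)" by (simp add: sums_iff)
  show "summable (\<lambda>k. l ^ (k + D) / fact (k + D))"
    using sm by (subst summable_iff_shift[where f="\<lambda>k. l ^ k / fact k"])
  have "exp l = (\<Sum>k. l ^ (k + D) / fact (k + D)) + (\<Sum>i<D. l ^ i / fact i)"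
    using suminf_split_initial_segment[OF sm, of D] ss by (simp add: sums_iff)
  moreover have "(\<Sum>i<D. l ^ i / fact i) \<ge> 0" using l by (intro sum_nonneg) auto
  ultimately show "(\<Sum>k. l ^ (k + D) / fact (k + D)) \<le> exp l" by linarith
qed

lemma inv_moment:
  fixes l :: real assumes l: "l > 0"
  shows "(\<Sum>k. l ^ k / fact k * exp (- l) * (1 / (real k + real D) ^ D)) \<le> 1 / l ^ D"
proof -
  have b1: "\<bar>1 / (real k + real D) ^ D\<bar> \<le> 1" if "D \<ge> 1 \<or> True" for k
  proof (cases "real k + real D \<ge> 1")
    case True
    then have "1 \<le> (real k + real D) ^ D" by (rule one_le_power)
    then show ?thesis by simp
  next
    case False
    then have "k = 0" "D = 0" by auto
    then show ?thesis by simp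
  qed
  have s1: "summable (\<lambda>k. l ^ k / fact k * exp (- l) * (1 / (real k + real D) ^ D))"
    by (rule cand_summable) (rule b1, simp)
  have s2: "summable (\<lambda>k. exp (- l) / l ^ D * (l ^ (k + D) / fact (k + D)))"
    by (intro summable_mult exp_tail_le(1)) (use l in simp)
  have "(\<Sum>k. l ^ k / fact k * exp (- l) * (1 / (real k + real D) ^ D)) \<le>
        (\<Sum>k. exp (- l) / l ^ D * (l ^ (k + D) / fact (k + D)))"
  proof (rule suminf_le[OF _ s1 s2])
    fix k
    have fpos: "(fact k :: real) > 0" "(fact (k + D) :: real) > 0" by auto
    have "1 / (real k + real D) ^ D \<le> fact k / fact (k + D)"
    proof (cases "k = 0 \<and> D = 0")
      case True then show ?thesis by simp
    next
      case False
      then have pos: "(real k + real D) ^ D > 0" by auto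
      show ?thesis using fact_shift_le[of k D] pos fpos by (simp add: divide_simps mult.commute)
    qed
    then have "l ^ k / fact k * exp (- l) * (1 / (real k + real D) ^ D) \<le>
          l ^ k / fact k * exp (- l) * (fact k / fact (k + D))"
      using l by (intro mult_left_mono) auto
    also have "\<dots> = exp (- l) / l ^ D * (l ^ (k + D) / fact (k + D))"
      using l fpos by (simp add: power_add field_simps)
    finally show "l ^ k / fact k * exp (- l) * (1 / (real k + real D) ^ D) \<le>
          exp (- l) / l ^ D * (l ^ (k + D) / fact (k + D))" .
  qed
  also have "\<dots> = exp (- l) / l ^ D * (\<Sum>k. l ^ (k + D) / fact (k + D))"
    by (rule suminf_mult) (rule exp_tail_le(1), use l in simp)
  also have "\<dots> \<le> exp (- l) / l ^ D * exp l"
    by (intro mult_left_mono exp_tail_le(2)) (use l in auto)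
  also have "\<dots> = 1 / l ^ D" by (simp add: exp_minus field_simps)
  finally show ?thesis .
qed

lemma sqrt_jensen:
  fixes w Y :: "nat \<Rightarrow> real"
  assumes w: "\<And>k. w k \<ge> 0" and sw: "summable w" and w1: "suminf w = 1"
    and Y: "\<And>k. 0 \<le> Y k" "\<And>k. Y k \<le> 1" and swY: "summable (\<lambda>k. w k * Y k)"
    and B: "B > 0" and EY: "(\<Sum>k. w k * Y k) \<le> B"
  shows "summable (\<lambda>k. w k * sqrt (Y k))" "(\<Sum>k. w k * sqrt (Y k)) \<le> sqrt B"
proof -
  show s1: "summable (\<lambda>k. w k * sqrt (Y k))"
    by (rule summable_comparison_test'[OF sw]) (use w Y in \<open>auto simp: abs_mult intro!: mult_left_le\<close>)
  have pt: "sqrt y \<le> (y + B) / (2 * sqrt B)" if "y \<ge> 0" for y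
  proof -
    have "0 \<le> (sqrt y - sqrt B)^2" by simp
    then have "2 * sqrt y * sqrt B \<le> y + B" using that B by (simp add: power2_eq_square algebra_simps)
    then show ?thesis using B by (simp add: field_simps)
  qed
  have s2: "summable (\<lambda>k. (w k * Y k + B * w k) / (2 * sqrt B))"
    by (intro summable_divide summable_add swY summable_mult sw)
  have "(\<Sum>k. w k * sqrt (Y k)) \<le> (\<Sum>k. (w k * Y k + B * w k) / (2 * sqrt B))"
  proof (rule suminf_le[OF _ s1 s2])
    fix k
    have "w k * sqrt (Y k) \<le> w k * ((Y k + B) / (2 * sqrt B))"
      by (intro mult_left_mono pt Y w)
    then show "w k * sqrt (Y k) \<le> (w k * Y k + B * w k) / (2 * sqrt B)"
      by (simp add: algebra_simps add_divide_distrib)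
  qed
  also have "\<dots> = ((\<Sum>k. w k * Y k) + B * (\<Sum>k. w k)) / (2 * sqrt B)"
  proof -
    have sB: "summable (\<lambda>k. B * w k)" by (rule summable_mult[OF sw])
    have "(\<Sum>k. (w k * Y k + B * w k) / (2 * sqrt B)) = (\<Sum>k. w k * Y k + B * w k) / (2 * sqrt B)"
      by (rule suminf_divide) (rule summable_add[OF swY sB])
    also have "(\<Sum>k. w k * Y k + B * w k) = (\<Sum>k. w k * Y k) + (\<Sum>k. B * w k)"
      by (rule suminf_add[symmetric, OF swY sB])
    also have "(\<Sum>k. B * w k) = B * (\<Sum>k. w k)" by (rule suminf_mult[OF sw])
    finally show ?thesis .
  qed
  also have "\<dots> \<le> (B + B) / (2 * sqrt B)"
    using EY w1 B by (intro divide_right_mono) auto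
  also have "\<dots> = sqrt B" using B by (simp add: field_simps real_sqrt_mult[symmetric])
  finally show "(\<Sum>k. w k * sqrt (Y k)) \<le> sqrt B" .
qed



lemma powr_neg_sqrt:
  fixes z :: real assumes z: "z > 0"
  shows "z powr (- (real D / 2)) = sqrt (1 / z ^ D)"
proof -
  have "sqrt (1 / z ^ D) = (z powr (- real D)) powr (1 / 2)"
    using z by (simp add: powr_half_sqrt powr_minus_divide powr_realpow)
  also have "\<dots> = z powr (- (real D / 2))" by (simp add: powr_powr)
  finally show ?thesis by simp
qed

lemma powr_half_sum_le:
  fixes m a :: real assumes m: "m > 0" and a: "a > 0" and le: "a \<le> 2 * m" and h: "h \<ge> 0"
  shows "m powr (- h) \<le> 2 powr h * a powr (- h)"
proof -
  have "m powr (- h) = (1 / m) powr h" using m by (simp add: powr_minus_divide powr_divide)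
  also have "\<dots> \<le> (2 / a) powr h" using m a le h by (intro powr_mono2) (auto simp: field_simps)
  also have "\<dots> = 2 powr h * a powr (- h)" using a by (simp add: powr_divide powr_minus_divide)
  finally show ?thesis .
qed

lemma poisson_powr_bound:
  fixes D :: nat and c0 A l :: real
  assumes D: "D \<ge> 1" and c0: "c0 > 0" and A: "A \<ge> c0" and l: "l \<ge> 0"
  shows "(\<Sum>k. l ^ k / fact k * exp (- l) * (A + real k) powr (- (real D / 2)))
     \<le> (min (c0 / real D) 1) powr (- (real D / 2)) * 2 powr (real D / 2) * (A + l) powr (- (real D / 2))"
proof -
  define h where "h = real D / 2"
  have h: "h > 0" using D by (simp add: h_def)
  define \<delta> where "\<delta> = min (c0 / real D) 1"
  have \<delta>: "\<delta> > 0" "\<delta> \<le> 1" using c0 D by (auto simp: \<delta>_def)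
  have \<delta>1: "\<delta> powr (- h) \<ge> 1" using \<delta> h by (simp add: powr_minus_divide ge_one_powr_ge_zero powr_le1)
  define w where "w k = l ^ k / fact k * exp (- l)" for k
  have w: "w k \<ge> 0" for k using l by (simp add: w_def)
  have Apos: "A > 0" using A c0 by simp
  define S where "S = (\<Sum>k. w k * (A + real k) powr (- h))"
  have bA: "\<bar>(A + real k) powr (- h)\<bar> \<le> A powr (- h)" for k
    using Apos h by (simp add: powr_mono2')
  have sS: "summable (\<lambda>k. w k * (A + real k) powr (- h))"
    unfolding w_def by (rule cand_summable) (rule bA)
  have wf: "w = (\<lambda>k. l ^ k / fact k * exp (- l))" by (simp add: fun_eq_iff w_def)
  have sw: "summable w" using cand_summable[of "\<lambda>_. 1" 1 l] by (simp add: wf)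
  have w1: "suminf w = 1" using cand_weights[of l] by (simp add: wf)
  have S1: "S \<le> A powr (- h)"
  proof -
    have "S \<le> (\<Sum>k. w k * A powr (- h))"
      unfolding S_def
      by (rule suminf_le[OF _ sS summable_mult2[OF sw]]) (use w bA in \<open>auto intro!: mult_left_mono simp: abs_le_iff\<close>)
    also have "\<dots> = A powr (- h)" using suminf_mult2[OF sw, of "A powr (- h)"] w1 by simp
    finally show ?thesis .
  qed
  have S2: "S \<le> \<delta> powr (- h) * l powr (- h)" if lpos: "l > 0"
  proof -
    define Y where "Y k = 1 / (real k + real D) ^ D" for k
    have kD: "real k + real D > 0" for k using D by simp
    have Y: "0 \<le> Y k" "Y k \<le> 1" for k
    proof -
      show "0 \<le> Y k" by (simp add: Y_def)
      have "1 \<le> real k + real D" using D by simp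
      then have "1 \<le> (real k + real D) ^ D" by (rule one_le_power)
      then show "Y k \<le> 1" by (simp add: Y_def)
    qed
    have bY: "\<bar>Y k\<bar> \<le> 1" for k using Y[of k] by simp
    have swY: "summable (\<lambda>k. w k * Y k)" unfolding w_def by (rule cand_summable) (rule bY)
    have EY: "(\<Sum>k. w k * Y k) \<le> 1 / l ^ D"
      using inv_moment[OF lpos, of D] by (simp add: w_def Y_def)
    have Bpos: "1 / l ^ D > 0" using lpos by simp
    note J = sqrt_jensen[OF w sw w1 Y swY Bpos EY]
    have eqY: "(real k + real D) powr (- h) = sqrt (Y k)" for k
      unfolding h_def Y_def by (rule powr_neg_sqrt[OF kD])
    have le1: "(A + real k) powr (- h) \<le> \<delta> powr (- h) * (real k + real D) powr (- h)" for k
    proof -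
      have "\<delta> * (real k + real D) \<le> A + real k"
      proof (cases "c0 / real D \<le> 1")
        case True
        then have "\<delta> = c0 / real D" by (simp add: \<delta>_def)
        moreover have "c0 / real D * real k \<le> real k" using True by (intro mult_left_le_one_le) (use c0 in auto)
        moreover have "c0 / real D * real D = c0" using D by simp
        ultimately show ?thesis using A by (simp add: distrib_left)
      next
        case False
        then have "\<delta> = 1" by (simp add: \<delta>_def)
        moreover have "real D \<le> c0" using False D by (simp add: field_simps)
        ultimately show ?thesis using A by simp
      qed
      then have "(A + real k) powr (- h) \<le> (\<delta> * (real k + real D)) powr (- h)"
        using \<delta> kD[of k] h by (intro powr_mono2') auto
      also have "\<dots> = \<delta> powr (- h) * (real k + real D) powr (- h)"
        using \<delta> kD[of k] by (simp add: powr_mult)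
      finally show ?thesis .
    qed
    have sJ: "summable (\<lambda>k. \<delta> powr (- h) * (w k * sqrt (Y k)))" by (rule summable_mult[OF J(1)])
    have "S \<le> (\<Sum>k. \<delta> powr (- h) * (w k * sqrt (Y k)))"
      unfolding S_def
    proof (rule suminf_le[OF _ sS sJ])
      fix k
      have "w k * (A + real k) powr (- h) \<le> w k * (\<delta> powr (- h) * (real k + real D) powr (- h))"
        by (intro mult_left_mono le1 w)
      then show "w k * (A + real k) powr (- h) \<le> \<delta> powr (- h) * (w k * sqrt (Y k))"
        by (simp add: eqY mult_ac)
    qed
    also have "\<dots> = \<delta> powr (- h) * (\<Sum>k. w k * sqrt (Y k))" by (rule suminf_mult[OF J(1)])
    also have "\<dots> \<le> \<delta> powr (- h) * sqrt (1 / l ^ D)" by (intro mult_left_mono J(2)) auto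
    also have "sqrt (1 / l ^ D) = l powr (- h)" unfolding h_def by (rule powr_neg_sqrt[OF lpos, symmetric])
    finally show ?thesis .
  qed
  have K: "S \<le> \<delta> powr (- h) * 2 powr h * (A + l) powr (- h)"
  proof (cases "l \<le> A")
    case True
    have "S \<le> A powr (- h)" by (rule S1)
    also have "\<dots> \<le> \<delta> powr (- h) * A powr (- h)" using \<delta>1 by (simp add: mult_le_cancel_right1)
    also have "\<dots> \<le> \<delta> powr (- h) * (2 powr h * (A + l) powr (- h))"
      using True Apos l h by (intro mult_left_mono powr_half_sum_le) auto
    finally show ?thesis by (simp add: mult_ac)
  next
    case False
    then have lpos: "l > 0" using Apos by simp
    have "S \<le> \<delta> powr (- h) * l powr (- h)" by (rule S2[OF lpos])
    also have "\<dots> \<le> \<delta> powr (- h) * (2 powr h * (A + l) powr (- h))"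
      using False Apos lpos h by (intro mult_left_mono powr_half_sum_le) auto
    finally show ?thesis by (simp add: mult_ac)
  qed
  then show ?thesis unfolding S_def w_def h_def \<delta>_def by simp
qed



lemma uc_decay:
  fixes x y :: "real^'n"
  assumes c0: "c0 > 0" and e: "\<epsilon> > 0" and th: "\<theta> > 0" and c: "\<theta> * \<epsilon>^2 \<ge> c0" and t: "t \<ge> 0"
  shows "uc \<epsilon> \<theta> x t y \<le> ((2 * pi) powr (- (real CARD('n) / 2)) *
      ((min (c0 / real CARD('n)) 1) powr (- (real CARD('n) / 2)) * 2 powr (real CARD('n) / 2)))
      / (\<epsilon>^2 + t) powr (real CARD('n) / 2)"
proof -
  define D where "D = CARD('n)"
  have D: "D \<ge> 1" unfolding D_def using finite_UNIV_card_ge_0[where 'a='n] by simp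
  define h where "h = real D / 2"
  define K where "K = (min (c0 / real D) 1) powr (- h) * 2 powr h"
  define A where "A = \<theta> * \<epsilon>^2"
  have Apos: "A > 0" using th e by (simp add: A_def)
  define l where "l = \<theta> * t"
  have l: "l \<ge> 0" using th t by (simp add: l_def)
  define w where "w k = l ^ k / fact k * exp (- l)" for k
  have w: "w k \<ge> 0" for k using l by (simp add: w_def)
  define P where "P = (2 * pi / \<theta>) powr (- h)"
  have akb: "ak \<epsilon> \<theta> x k y \<le> P * (A + real k) powr (- h)" for k
  proof -
    have ek: "\<epsilon>^2 + real k / \<theta> > 0" using e th by (simp add: add_pos_nonneg)
    have "ak \<epsilon> \<theta> x k y \<le> (2 * pi * (\<epsilon>^2 + real k / \<theta>)) powr (- real CARD('n) / 2)"
      unfolding ak_def by (rule heat_bound[OF ek])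
    also have "2 * pi * (\<epsilon>^2 + real k / \<theta>) = (2 * pi / \<theta>) * (A + real k)"
      using th by (simp add: A_def field_simps)
    also have "((2 * pi / \<theta>) * (A + real k)) powr (- real CARD('n) / 2) = P * (A + real k) powr (- h)"
      using th Apos unfolding P_def h_def D_def by (subst powr_mult) auto
    finally show ?thesis .
  qed
  have bA: "\<bar>(A + real k) powr (- h)\<bar> \<le> A powr (- h)" for k
    using Apos D by (simp add: powr_mono2' h_def)
  have ak_abs': "\<And>k. \<bar>ak \<epsilon> \<theta> x k y\<bar> \<le> (2 * pi * \<epsilon>^2) powr (- real CARD('n) / 2)"
    by (rule ak_abs[OF e th])
  have s1: "summable (\<lambda>k. w k * ak \<epsilon> \<theta> x k y)"
    unfolding w_def by (rule cand_summable) (rule ak_abs')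
  have bPA: "\<bar>P * (A + real k) powr (- h)\<bar> \<le> \<bar>P\<bar> * A powr (- h)" for k
    using bA[of k] by (simp add: abs_mult mult_left_mono)
  have s2: "summable (\<lambda>k. w k * (P * (A + real k) powr (- h)))"
    unfolding w_def by (rule cand_summable) (rule bPA)
  have sS: "summable (\<lambda>k. w k * (A + real k) powr (- h))"
    unfolding w_def by (rule cand_summable) (rule bA)
  have "uc \<epsilon> \<theta> x t y = (\<Sum>k. w k * ak \<epsilon> \<theta> x k y)"
    unfolding uc_def cand_def w_def l_def ..
  also have "\<dots> \<le> (\<Sum>k. w k * (P * (A + real k) powr (- h)))"
    by (rule suminf_le[OF _ s1 s2]) (intro mult_left_mono akb w)
  also have "\<dots> = P * (\<Sum>k. w k * (A + real k) powr (- h))"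
    using suminf_mult[OF sS, of P] by (simp add: mult_ac)
  also have "\<dots> \<le> P * (K * (A + l) powr (- h))"
  proof (intro mult_left_mono)
    show "0 \<le> P" by (simp add: P_def)
    show "(\<Sum>k. w k * (A + real k) powr (- h)) \<le> K * (A + l) powr (- h)"
      using poisson_powr_bound[OF D c0 _ l, of A] c unfolding K_def h_def w_def A_def
      by (simp add: mult_ac)
  qed
  also have "P * (A + l) powr (- h) = (2 * pi) powr (- h) * (\<epsilon>^2 + t) powr (- h)"
  proof -
    have "P * (A + l) powr (- h) = (2 * pi / \<theta> * (A + l)) powr (- h)"
      unfolding P_def using th Apos l by (subst powr_mult) auto
    also have "2 * pi / \<theta> * (A + l) = 2 * pi * (\<epsilon>^2 + t)"
      using th by (simp add: A_def l_def field_simps)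
    also have "(2 * pi * (\<epsilon>^2 + t)) powr (- h) = (2 * pi) powr (- h) * (\<epsilon>^2 + t) powr (- h)"
      using e t by (subst powr_mult) (auto simp: add_pos_nonneg)
    finally show ?thesis .
  qed
  then have "P * (K * (A + l) powr (- h)) = ((2 * pi) powr (- h) * K) * (\<epsilon>^2 + t) powr (- h)"
    by (simp add: mult_ac)
  also have "\<dots> = ((2 * pi) powr (- h) * K) / (\<epsilon>^2 + t) powr h"
    by (simp add: powr_minus_divide)
  finally show ?thesis unfolding K_def h_def D_def by simp
qed

theorem mainTheorem16:
  fixes c0 :: real
  assumes c0_pos: "c0 > 0"
  shows
    "(\<forall>(\<epsilon>::real) (\<theta>::real) (x::real^'n) (\<psi>::real \<Rightarrow> real^'n \<Rightarrow> real) (M::'a measure) N.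
        \<epsilon> > 0 \<longrightarrow> \<theta> > 0 \<longrightarrow> \<theta> * \<epsilon>^2 \<ge> c0 \<longrightarrow>
        solves_generator_eq \<theta> (heat_kernel (\<epsilon>^2) x) \<psi> \<longrightarrow>
        rate_one_poisson_process M N \<longrightarrow>
        (\<forall>t\<ge>0. \<forall>y.
           \<psi> t y = (\<integral>\<omega>. heat_kernel (\<epsilon>^2 + real (N (\<theta> * t) \<omega>) / \<theta>) x y \<partial>M)))
     \<and>
     (\<exists>C. \<forall>(\<epsilon>::real) (\<theta>::real) (x::real^'n) (\<psi>::real \<Rightarrow> real^'n \<Rightarrow> real).
        \<epsilon> > 0 \<longrightarrow> \<theta> > 0 \<longrightarrow> \<theta> * \<epsilon>^2 \<ge> c0 \<longrightarrow>
        solves_generator_eq \<theta> (heat_kernel (\<epsilon>^2) x) \<psi> \<longrightarrow>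
        (\<forall>t\<ge>0. bdd_above (range (\<lambda>y. \<bar>\<psi> t y\<bar>)) \<and>
           (SUP y. \<bar>\<psi> t y\<bar>) \<le> C / (\<epsilon>^2 + t) powr (real CARD('n) / 2)))"
proof (intro conjI allI impI)
  fix \<epsilon> \<theta> :: real and x :: "real^'n" and \<psi> :: "real \<Rightarrow> real^'n \<Rightarrow> real" and M :: "'a measure" and N :: "real \<Rightarrow> 'a \<Rightarrow> nat" and t :: real and y :: "real^'n"
  assume e: "\<epsilon> > 0" and th: "\<theta> > 0" and "\<theta> * \<epsilon>^2 \<ge> c0"
    and sol: "solves_generator_eq \<theta> (heat_kernel (\<epsilon>^2) x) \<psi>"
    and P: "rate_one_poisson_process M N" and t: "t \<ge> 0"
  show "\<psi> t y = (\<integral>\<omega>. heat_kernel (\<epsilon>^2 + real (N (\<theta> * t) \<omega>) / \<theta>) x y \<partial>M)"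
    using psi_eq_uc[OF e th sol t, of y] poisson_expect[OF e th P t, of x y] by simp
next
  define C where "C = (2 * pi) powr (- (real CARD('n) / 2)) *
      ((min (c0 / real CARD('n)) 1) powr (- (real CARD('n) / 2)) * 2 powr (real CARD('n) / 2))"
  show "\<exists>C. \<forall>(\<epsilon>::real) (\<theta>::real) (x::real^'n) (\<psi>::real \<Rightarrow> real^'n \<Rightarrow> real).
        \<epsilon> > 0 \<longrightarrow> \<theta> > 0 \<longrightarrow> \<theta> * \<epsilon>^2 \<ge> c0 \<longrightarrow>
        solves_generator_eq \<theta> (heat_kernel (\<epsilon>^2) x) \<psi> \<longrightarrow>
        (\<forall>t\<ge>0. bdd_above (range (\<lambda>y. \<bar>\<psi> t y\<bar>)) \<and>
           (SUP y. \<bar>\<psi> t y\<bar>) \<le> C / (\<epsilon>^2 + t) powr (real CARD('n) / 2))"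
  proof (intro exI[of _ C] allI impI conjI)
    fix \<epsilon> \<theta> :: real and x :: "real^'n" and \<psi> :: "real \<Rightarrow> real^'n \<Rightarrow> real" and t :: real
    assume e: "\<epsilon> > 0" and th: "\<theta> > 0" and c: "\<theta> * \<epsilon>^2 \<ge> c0"
      and sol: "solves_generator_eq \<theta> (heat_kernel (\<epsilon>^2) x) \<psi>" and t: "t \<ge> 0"
    have pt: "\<bar>\<psi> t y\<bar> \<le> C / (\<epsilon>^2 + t) powr (real CARD('n) / 2)" for y
    proof -
      have "\<bar>\<psi> t y\<bar> = uc \<epsilon> \<theta> x t y"
        using psi_eq_uc[OF e th sol t, of y] uc_bound(1)[OF e th t, of x y] by simp
      also have "\<dots> \<le> C / (\<epsilon>^2 + t) powr (real CARD('n) / 2)"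
        unfolding C_def by (rule uc_decay[OF c0_pos e th c t])
      finally show ?thesis .
    qed
    show "bdd_above (range (\<lambda>y. \<bar>\<psi> t y\<bar>))"
      using pt by (intro bdd_aboveI2) auto
    show "(SUP y. \<bar>\<psi> t y\<bar>) \<le> C / (\<epsilon>^2 + t) powr (real CARD('n) / 2)"
      using pt by (intro cSUP_least) auto
  qed
qed


end
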